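(* Let $E\subseteq\mathbb{R}^n$ be compact. Let $S,S'$ be weight sequences with $s_k^{1/k}\to\infty$, $(s'_k)^{1/k}\to\infty$, and suppose there is $\lambda\le1$ with $2\overline{\Gamma}_{s'}(t)\le\underline{\Gamma}_s(\lambda t)$ for all $t>0$. Then there is a constant $D_1>1$ (depending on $S,S'$, $n$) such that the following holds. Let $F=(F^\alpha)_\alpha$ be a jet on $E$ for which there are $C>0$, $\rho\ge1$ with $$|F^\alpha(a)|\le C\rho^{|\alpha|}S_{|\alpha|},\qquad |(R^k_aF)^\alpha(b)|\le C\rho^{k+1}|\alpha|!\,s_{k+1}|b-a|^{k+1-|\alpha|}$$ for all $\alpha\in\mathbb{N}^n$, $k\ge|\alpha|$, $a,b\in E$. Then for all $L\ge D_1\rho$, all $x\in\mathbb{R}^n\setminus E$ and all $\alpha\in\mathbb{N}^n$, $$|(T^{2\overline{\Gamma}_{s'}(Ld(x))}_{\hat x}F)^{(\alpha)}(x)|\le C(2L)^{|\alpha|+1}S_{|\alpha|},$$ and, if $|\alpha|<2\overline{\Gamma}_{s'}(Ld(x))$, $$|(T^{2\overline{\Gamma}_{s'}(Ld(x))}_{\hat x}F)^{(\alpha)}(x)-F^\alpha(\hat x)|\le C(2L)^{|\alpha|+1}|\alpha|!\,s_{|\alpha|+1}\,d(x).$$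
   Context: A weight sequence is given by an increasing sequence $1=\sigma_0\le\sigma_1\le\cdots$ via $S_k=\sigma_0\cdots\sigma_k=k!\,s_k$, with $S_k^{1/k}\to\infty$; analogously $S'\leftrightarrow s'$. For a positive sequence $m$ with $m_0=1$, $m_k^{1/k}\to\infty$, $m_{k+1}/m_k\to\infty$: $h_m(t)=\inf_km_kt^k$, $\overline{\Gamma}_m(t)=\min\{k:h_m(t)=m_kt^k\}$, $\underline{\Gamma}_m(t)=\min\{k:m_{k+1}/m_k\ge1/t\}$ ($t>0$). A jet on $E$ is $F=(F^\alpha)_{\alpha\in\mathbb{N}^n}$, $F^\alpha\in C^0(E)$; $T^p_aF(x)=\sum_{|\alpha|\le p}\frac{(x-a)^\alpha}{\alpha!}F^\alpha(a)$; $(R^p_aF)^\alpha(x)=F^\alpha(x)-\sum_{|\beta|\le p-|\alpha|}\frac{(x-a)^\beta}{\beta!}F^{\alpha+\beta}(a)$. $d(x)=\operatorname{dist}(x,E)$ and $\hat x$ denotes any point of $E$ with $|x-\hat x|=d(x)$. *)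

theory Defs
  imports "HOL-Analysis.Analysis"
begin

definition Wseq :: "(nat \<Rightarrow> real) \<Rightarrow> nat \<Rightarrow> real" where
  "Wseq \<sigma> k = (\<Prod>i\<le>k. \<sigma> i)"

definition wseq :: "(nat \<Rightarrow> real) \<Rightarrow> nat \<Rightarrow> real" where
  "wseq \<sigma> k = Wseq \<sigma> k / fact k"

definition weight_sequence :: "(nat \<Rightarrow> real) \<Rightarrow> bool" where
  "weight_sequence \<sigma> \<longleftrightarrow> \<sigma> 0 = 1 \<and> incseq \<sigma> \<and>
     filterlim (\<lambda>k. Wseq \<sigma> k powr (1 / real k)) at_top sequentially"

definition h_fun :: "(nat \<Rightarrow> real) \<Rightarrow> real \<Rightarrow> real" where
  "h_fun m t = (INF k. m k * t ^ k)"

definition Gamma_upper :: "(nat \<Rightarrow> real) \<Rightarrow> real \<Rightarrow> nat" where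
  "Gamma_upper m t = (LEAST k. h_fun m t = m k * t ^ k)"

definition Gamma_lower :: "(nat \<Rightarrow> real) \<Rightarrow> real \<Rightarrow> nat" where
  "Gamma_lower m t = (LEAST k. m (Suc k) / m k \<ge> 1 / t)"

definition mabs :: "('n::finite \<Rightarrow> nat) \<Rightarrow> nat" where
  "mabs \<alpha> = (\<Sum>i\<in>UNIV. \<alpha> i)"

definition mfact :: "('n::finite \<Rightarrow> nat) \<Rightarrow> real" where
  "mfact \<alpha> = (\<Prod>i\<in>UNIV. fact (\<alpha> i))"

definition mpow :: "real^'n::finite \<Rightarrow> ('n \<Rightarrow> nat) \<Rightarrow> real" where
  "mpow v \<alpha> = (\<Prod>i\<in>UNIV. (v $ i) ^ (\<alpha> i))"

definition is_jet :: "(real^'n::finite) set \<Rightarrow> (('n \<Rightarrow> nat) \<Rightarrow> real^'n \<Rightarrow> real) \<Rightarrow> bool" where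
  "is_jet E F \<longleftrightarrow> (\<forall>\<alpha>. continuous_on E (F \<alpha>))"

text \<open>alpha-th partial derivative at x of the Taylor polynomial T^p_a F, written out:
  it is the sum over |beta| <= p - |alpha| of (x-a)^beta/beta! * F^(alpha+beta)(a)
  when |alpha| <= p, and 0 when |alpha| > p.\<close>

definition taylor_deriv :: "nat \<Rightarrow> real^'n::finite \<Rightarrow> (('n \<Rightarrow> nat) \<Rightarrow> real^'n \<Rightarrow> real)
    \<Rightarrow> ('n \<Rightarrow> nat) \<Rightarrow> real^'n \<Rightarrow> real" where
  "taylor_deriv p a F \<alpha> x =
     (if mabs \<alpha> \<le> p then
        (\<Sum>\<beta>\<in>{\<beta>. mabs \<beta> \<le> p - mabs \<alpha>}. mpow (x - a) \<beta> / mfact \<beta> * F (\<lambda>i. \<alpha> i + \<beta> i) a)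
      else 0)"

definition remainder :: "nat \<Rightarrow> real^'n::finite \<Rightarrow> (('n \<Rightarrow> nat) \<Rightarrow> real^'n \<Rightarrow> real)
    \<Rightarrow> ('n \<Rightarrow> nat) \<Rightarrow> real^'n \<Rightarrow> real" where
  "remainder p a F \<alpha> x =
     F \<alpha> x - (\<Sum>\<beta>\<in>{\<beta>. mabs \<beta> \<le> p - mabs \<alpha>}. mpow (x - a) \<beta> / mfact \<beta> * F (\<lambda>i. \<alpha> i + \<beta> i) a)"

end

theory Submission
  imports Defs "HOL-Library.FuncSet"
begin

lemma fact_add_le: "fact (a+b) \<le> 2^(a+b) * fact a * (fact b::real)"
proof -
  have "fact a * fact b * ((a+b) choose a) = (fact (a+b) :: nat)"
    using binomial_fact_lemma[of a "a+b"] by simp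
  hence "(fact (a+b)::real) = fact a * fact b * real ((a+b) choose a)"
    by (metis of_nat_fact of_nat_mult)
  also have "\<dots> \<le> fact a * fact b * 2^(a+b)"
    using binomial_le_pow2[of "a+b" a]
    by (intro mult_left_mono) (auto simp: of_nat_le_iff[symmetric])
  finally show ?thesis by (simp add: algebra_simps)
qed

lemma fact_sum_le:
  fixes \<beta> :: "'a \<Rightarrow> nat"
  assumes "finite A"
  shows "(fact (\<Sum>i\<in>A. \<beta> i) :: real) \<le> (2 ^ card A) ^ (\<Sum>i\<in>A. \<beta> i) * (\<Prod>i\<in>A. fact (\<beta> i))"
  using assms
proof (induction A rule: finite_induct)
  case empty then show ?case by simp
next
  case (insert i A)
  let ?s = "\<Sum>i\<in>A. \<beta> i" and ?P = "(\<Prod>i\<in>A. fact (\<beta> i)) :: real"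
  have "(fact (\<beta> i + ?s)::real) \<le> 2^(\<beta> i + ?s) * fact (\<beta> i) * fact ?s" by (rule fact_add_le)
  also have "\<dots> \<le> 2^(\<beta> i + ?s) * fact (\<beta> i) * ((2 ^ card A) ^ ?s * ?P)"
    by (intro mult_left_mono insert.IH) auto
  also have "\<dots> = 2^(\<beta> i + ?s) * (2 ^ card A) ^ ?s * (fact (\<beta> i) * ?P)" by simp
  also have "\<dots> \<le> 2^(\<beta> i + ?s) * (2 ^ card A) ^ (\<beta> i + ?s) * (fact (\<beta> i) * ?P)"
    by (intro mult_right_mono mult_left_mono power_increasing) (auto intro!: prod_nonneg mult_nonneg_nonneg)
  also have "\<dots> = (2 ^ (card A + 1)) ^ (\<beta> i + ?s) * (fact (\<beta> i) * ?P)"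
    by (simp add: power_mult_distrib)
  finally show ?case using insert by simp
qed

lemma mfact_bound: "(fact (mabs (\<beta>::'n::finite\<Rightarrow>nat)) :: real) \<le> (2 ^ CARD('n)) ^ mabs \<beta> * mfact \<beta>"
  unfolding mabs_def mfact_def by (rule fact_sum_le) simp

lemma mpow_bound: "\<bar>mpow (v::real^'n::finite) \<beta>\<bar> \<le> norm v ^ mabs \<beta>"
proof -
  have "\<bar>mpow v \<beta>\<bar> = (\<Prod>i\<in>UNIV. \<bar>v $ i\<bar> ^ \<beta> i)" unfolding mpow_def by (simp add: abs_prod power_abs)
  also have "\<dots> \<le> (\<Prod>i\<in>UNIV. norm v ^ \<beta> i)"
    by (intro prod_mono conjI power_mono) (auto simp: component_le_norm_cart)
  also have "\<dots> = norm v ^ mabs \<beta>" unfolding mabs_def by (simp add: power_sum)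
  finally show ?thesis .
qed

lemma finite_mabs: "finite {\<beta>::'n::finite\<Rightarrow>nat. mabs \<beta> \<le> N}"
proof (rule finite_subset)
  show "{\<beta>::'n\<Rightarrow>nat. mabs \<beta> \<le> N} \<subseteq> PiE (UNIV::'n set) (\<lambda>_. {..N})"
  proof
    fix \<beta> :: "'n\<Rightarrow>nat" assume "\<beta> \<in> {\<beta>. mabs \<beta> \<le> N}"
    hence "\<beta> i \<le> N" for i unfolding mabs_def
      using member_le_sum[of i UNIV \<beta>] by simp
    thus "\<beta> \<in> PiE (UNIV::'n set) (\<lambda>_. {..N})" by auto
  qed
qed (simp add: finite_PiE)

lemma geom_half: "(\<Sum>b\<le>N. (1/2::real)^b) = 2 - (1/2)^N"
  by (induction N) (auto simp: field_simps)

lemma geom_sum_mabs: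
  fixes c :: real assumes "0 \<le> c" "c \<le> 1/2"
  shows "(\<Sum>\<beta>\<in>{\<beta>::'n::finite\<Rightarrow>nat. mabs \<beta> \<le> N}. c ^ mabs \<beta>) \<le> 2 ^ CARD('n)"
proof -
  have sub: "{\<beta>::'n\<Rightarrow>nat. mabs \<beta> \<le> N} \<subseteq> PiE (UNIV::'n set) (\<lambda>_. {..N})"
  proof
    fix \<beta> :: "'n\<Rightarrow>nat" assume "\<beta> \<in> {\<beta>. mabs \<beta> \<le> N}"
    hence "\<beta> i \<le> N" for i unfolding mabs_def
      using member_le_sum[of i UNIV \<beta>] by simp
    thus "\<beta> \<in> PiE (UNIV::'n set) (\<lambda>_. {..N})" by auto
  qed
  have "(\<Sum>\<beta>\<in>{\<beta>::'n\<Rightarrow>nat. mabs \<beta> \<le> N}. c ^ mabs \<beta>) \<le> (\<Sum>\<beta>\<in>PiE (UNIV::'n set) (\<lambda>_. {..N}). c ^ mabs \<beta>)"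
    by (rule sum_mono2[OF _ sub]) (auto simp: finite_PiE assms)
  also have "\<dots> = (\<Sum>\<beta>\<in>PiE UNIV (\<lambda>_::'n. {..N}). \<Prod>i\<in>UNIV. c ^ \<beta> i)"
    unfolding mabs_def by (simp add: power_sum)
  also have "\<dots> = (\<Prod>i\<in>(UNIV::'n set). \<Sum>b\<in>{..N}. c ^ b)"
    by (rule prod_sum_PiE[symmetric]) auto
  also have "\<dots> \<le> (\<Prod>i\<in>(UNIV::'n set). 2)"
  proof (intro prod_mono conjI)
    fix i
    show "0 \<le> (\<Sum>b\<in>{..N}. c ^ b)" using assms by (auto intro: sum_nonneg)
    have "(\<Sum>b\<in>{..N}. c ^ b) \<le> (\<Sum>b\<in>{..N}. (1/2::real) ^ b)"
      by (intro sum_mono power_mono) (use assms in auto)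
    also have "\<dots> \<le> 2"
      using geom_half[of N] by simp
    finally show "(\<Sum>b\<in>{..N}. c ^ b) \<le> 2" .
  qed
  also have "\<dots> = 2 ^ CARD('n)" by simp
  finally show ?thesis .
qed

lemma ratio_bound:
  fixes s :: "nat \<Rightarrow> real"
  assumes pos: "\<And>k. s k > 0" and t: "t > 0" and le: "a + j \<le> Gamma_lower s t"
  shows "s (a + j) \<le> s a * (1/t) ^ j"
  using le
proof (induction j)
  case 0 then show ?case by simp
next
  case (Suc j)
  have "a + j < Gamma_lower s t" using Suc.prems by simp
  hence "\<not> (s (Suc (a+j)) / s (a+j) \<ge> 1/t)" unfolding Gamma_lower_def by (rule not_less_Least)
  hence "s (Suc (a+j)) < s (a+j) / t" using pos[of "a+j"] t
    by (simp add: field_simps)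
  also have "\<dots> \<le> s a * (1/t) ^ j / t" using Suc.IH Suc.prems t by (simp add: divide_right_mono)
  finally show ?case by (simp add: field_simps)
qed


lemma base_bound:
  fixes v :: "real^'n::finite" and \<beta> :: "'n \<Rightarrow> nat" and W w :: "nat \<Rightarrow> real"
  assumes Fb: "\<bar>X\<bar> \<le> C * \<rho>^(a + mabs \<beta>) * W (a + mabs \<beta>)"
    and Ww: "\<And>k. W k = fact k * w k" and wpos: "\<And>k. w k > 0"
    and nv: "norm v \<le> d" and C: "C \<ge> 0" and r: "\<rho> \<ge> 0"
  shows "\<bar>mpow v \<beta> / mfact \<beta> * X\<bar> \<le> C * (2*\<rho>)^a * fact a * (2 * 2^CARD('n) * \<rho> * d)^(mabs \<beta>) * w (a + mabs \<beta>)"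
proof -
  define j where "j = mabs \<beta>"
  define K :: real where "K = 2^CARD('n)"
  have mf: "mfact \<beta> > 0" unfolding mfact_def by (auto intro: prod_pos)
  have d0: "0 \<le> d" using nv norm_ge_zero order_trans by blast
  have X0: "C * \<rho>^(a + j) * W (a + j) \<ge> 0" using Fb abs_ge_zero[of X] unfolding j_def by linarith
  have m1: "\<bar>mpow v \<beta>\<bar> \<le> d ^ j" unfolding j_def
    using mpow_bound[of v \<beta>] power_mono[OF nv norm_ge_zero, of "mabs \<beta>"] by linarith
  have "\<bar>mpow v \<beta> / mfact \<beta> * X\<bar> = \<bar>mpow v \<beta>\<bar> / mfact \<beta> * \<bar>X\<bar>" using mf by (simp add: abs_mult)
  also have "\<dots> \<le> d^j / mfact \<beta> * (C * \<rho>^(a+j) * W(a+j))"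
    using Fb m1 mf X0 unfolding j_def[symmetric]
    by (intro mult_mono divide_right_mono) auto
  also have "W(a+j) \<le> 2^(a+j) * fact a * (K^j * mfact \<beta>) * w(a+j)"
  proof -
    have "W(a+j) = fact (a+j) * w (a+j)" by (rule Ww)
    also have "\<dots> \<le> (2^(a+j) * fact a * fact j) * w(a+j)"
      by (intro mult_right_mono fact_add_le) (use wpos in \<open>auto intro: less_imp_le\<close>)
    also have "\<dots> \<le> 2^(a+j) * fact a * (K^j * mfact \<beta>) * w(a+j)"
      using mfact_bound[of \<beta>] wpos[of "a+j"] unfolding K_def j_def
      by (intro mult_right_mono mult_left_mono) auto
    finally show ?thesis .
  qed
  hence "d^j / mfact \<beta> * (C * \<rho>^(a+j) * W(a+j)) \<le> d^j / mfact \<beta> * (C * \<rho>^(a+j) * (2^(a+j) * fact a * (K^j * mfact \<beta>) * w(a+j)))"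
    using mf d0 C r by (intro mult_left_mono) auto
  also have "\<dots> = C * (2*\<rho>)^a * fact a * (2 * K * \<rho> * d)^j * w (a + j)"
    using mf by (simp add: power_add power_mult_distrib field_simps)
  finally show ?thesis unfolding j_def K_def .
qed


lemma mabs_add: "mabs (\<lambda>i. \<alpha> i + \<beta> i) = mabs \<alpha> + mabs (\<beta>::'n::finite \<Rightarrow> nat)"
  unfolding mabs_def by (simp add: sum.distrib)

lemma mabs_zero_iff: "mabs (\<beta>::'n::finite \<Rightarrow> nat) = 0 \<longleftrightarrow> \<beta> = (\<lambda>_. 0)"
  unfolding mabs_def by (auto simp: fun_eq_iff)

theorem lemma5p2:
  fixes \<sigma> \<sigma>' :: "nat \<Rightarrow> real"
  assumes "weight_sequence \<sigma>" and "weight_sequence \<sigma>'"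
    and "filterlim (\<lambda>k. wseq \<sigma> k powr (1 / real k)) at_top sequentially"
    and "filterlim (\<lambda>k. wseq \<sigma>' k powr (1 / real k)) at_top sequentially"
    and "\<exists>lam>0. lam \<le> 1 \<and>
           (\<forall>t>0. 2 * Gamma_upper (wseq \<sigma>') t \<le> Gamma_lower (wseq \<sigma>) (lam * t))"
  shows "\<exists>D1>1. \<forall>(E :: (real^'n::finite) set) (F :: ('n \<Rightarrow> nat) \<Rightarrow> real^'n \<Rightarrow> real) C \<rho>.
    compact E \<longrightarrow> is_jet E F \<longrightarrow> C > 0 \<longrightarrow> \<rho> \<ge> 1 \<longrightarrow>
    (\<forall>\<alpha>. \<forall>a\<in>E. \<bar>F \<alpha> a\<bar> \<le> C * \<rho> ^ mabs \<alpha> * Wseq \<sigma> (mabs \<alpha>)) \<longrightarrow>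
    (\<forall>\<alpha> k. k \<ge> mabs \<alpha> \<longrightarrow> (\<forall>a\<in>E. \<forall>b\<in>E.
       \<bar>remainder k a F \<alpha> b\<bar> \<le> C * \<rho> ^ (k + 1) * fact (mabs \<alpha>) * wseq \<sigma> (k + 1)
                                  * norm (b - a) ^ (k + 1 - mabs \<alpha>))) \<longrightarrow>
    (\<forall>L \<ge> D1 * \<rho>. \<forall>x. x \<notin> E \<longrightarrow> (\<forall>xh\<in>E. dist x xh = infdist x E \<longrightarrow> (\<forall>\<alpha>.
       (let p = 2 * Gamma_upper (wseq \<sigma>') (L * infdist x E) in
         \<bar>taylor_deriv p xh F \<alpha> x\<bar> \<le> C * (2 * L) ^ (mabs \<alpha> + 1) * Wseq \<sigma> (mabs \<alpha>) \<and>
         (mabs \<alpha> < p \<longrightarrow>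
           \<bar>taylor_deriv p xh F \<alpha> x - F \<alpha> xh\<bar>
             \<le> C * (2 * L) ^ (mabs \<alpha> + 1) * fact (mabs \<alpha>) * wseq \<sigma> (mabs \<alpha> + 1) * infdist x E)))))"
proof -
  obtain lam where lam0: "lam > 0" "lam \<le> 1"
    and lamG: "\<forall>t>0. 2 * Gamma_upper (wseq \<sigma>') t \<le> Gamma_lower (wseq \<sigma>) (lam * t)"
    using assms(5) by blast
  define K :: real where "K = 2^CARD('n)"
  have "0 < CARD('n)" by simp
  hence K2: "K \<ge> 2" unfolding K_def
    using power_increasing[of 1 "CARD('n)" "2::real"] by simp
  define D1 where "D1 = 8*K^2/lam"
  have "8*K^2 \<le> D1" unfolding D1_def using lam0 K2 by (simp add: field_simps mult_left_mono)
  moreover have K8: "(1::real) < 8*K^2" using power_mono[OF K2, of 2] by simp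
  ultimately have D1: "D1 > 1" by linarith
  have sg: "\<sigma> k \<ge> 1" for k
    using assms(1) unfolding weight_sequence_def incseq_def
    by (metis le0)
  have Wge: "Wseq \<sigma> k \<ge> 1" for k unfolding Wseq_def using sg by (intro prod_ge_1) auto
  have wpos: "wseq \<sigma> k > 0" for k unfolding wseq_def using Wge[of k] by simp
  have Ww: "Wseq \<sigma> k = fact k * wseq \<sigma> k" for k unfolding wseq_def by simp
  show ?thesis
  proof (rule exI[of _ D1], intro conjI allI impI ballI D1)
    fix E :: "(real^'n) set" and F :: "('n \<Rightarrow> nat) \<Rightarrow> real^'n \<Rightarrow> real" and C \<rho> L x xh
    fix \<alpha> :: "'n \<Rightarrow> nat"
    assume cE: "compact E" and jet: "is_jet E F" and C0: "C > 0" and r1: "\<rho> \<ge> 1"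
      and Fb: "\<forall>\<alpha>. \<forall>a\<in>E. \<bar>F \<alpha> a\<bar> \<le> C * \<rho> ^ mabs \<alpha> * Wseq \<sigma> (mabs \<alpha>)"
      and Rb: "\<forall>\<alpha> k. k \<ge> mabs \<alpha> \<longrightarrow> (\<forall>a\<in>E. \<forall>b\<in>E.
       \<bar>remainder k a F \<alpha> b\<bar> \<le> C * \<rho> ^ (k + 1) * fact (mabs \<alpha>) * wseq \<sigma> (k + 1)
                                  * norm (b - a) ^ (k + 1 - mabs \<alpha>))"
      and L: "L \<ge> D1 * \<rho>" and xE: "x \<notin> E" and xhE: "xh \<in> E" and dx: "dist x xh = infdist x E"
    define d where "d = infdist x E"
    define a where "a = mabs \<alpha>"
    define p where "p = 2 * Gamma_upper (wseq \<sigma>') (L * d)"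
    define B where "B = {\<beta>::'n\<Rightarrow>nat. mabs \<beta> \<le> p - a}"
    define T where "T \<beta> = mpow (x - xh) \<beta> / mfact \<beta> * F (\<lambda>i. \<alpha> i + \<beta> i) xh" for \<beta>
    define t where "t = lam * (L * d)"
    define r where "r = 2*K*\<rho>/(lam*L)"
    have dpos: "d > 0"
    proof -
      have "d \<ge> 0" unfolding d_def by (rule infdist_nonneg)
      moreover have "d \<noteq> 0" using dx xE xhE unfolding d_def by auto
      ultimately show ?thesis by simp
    qed
    have nv: "norm (x - xh) \<le> d" using dx unfolding d_def by (simp add: dist_norm)
    have LK: "L \<ge> 8*K^2*\<rho>"
    proof -
      have "8*K^2*\<rho> \<le> D1 * \<rho>" using \<open>8*K^2 \<le> D1\<close> r1 by (intro mult_right_mono) auto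
      thus ?thesis using L by linarith
    qed
    have K2r: "K \<le> K^2" using K2 by (simp add: power2_eq_square)
    have Lr: "L \<ge> \<rho>"
    proof -
      have "1*\<rho> \<le> (8*K^2)*\<rho>" using K8 r1 by (intro mult_right_mono) auto
      thus ?thesis using LK by simp
    qed
    have Lpos: "L > 0" using Lr r1 by linarith
    have tpos: "t > 0" unfolding t_def using lam0 Lpos dpos by simp
    have pG: "p \<le> Gamma_lower (wseq \<sigma>) t"
      unfolding p_def t_def using lamG Lpos dpos by simp
    have r0: "r \<ge> 0" unfolding r_def using K2 r1 lam0 Lpos by simp
    have lamL: "lam * L \<ge> 8*K^2*\<rho>"
    proof -
      have "lam * L \<ge> lam * (D1 * \<rho>)" using L lam0 by simp
      also have "lam * (D1 * \<rho>) = 8*K^2*\<rho>" unfolding D1_def using lam0 by simp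
      finally show ?thesis .
    qed
    have r4: "r \<le> 1/4"
    proof -
      have "8*K*\<rho> \<le> 8*K^2*\<rho>" using K2r r1 by simp
      hence "8*K*\<rho> \<le> lam * L" using lamL by linarith
      thus ?thesis unfolding r_def using lam0 Lpos by (simp add: field_simps)
    qed
    show "let p = 2 * Gamma_upper (wseq \<sigma>') (L * infdist x E) in
         \<bar>taylor_deriv p xh F \<alpha> x\<bar> \<le> C * (2 * L) ^ (mabs \<alpha> + 1) * Wseq \<sigma> (mabs \<alpha>) \<and>
         (mabs \<alpha> < p \<longrightarrow>
           \<bar>taylor_deriv p xh F \<alpha> x - F \<alpha> xh\<bar>
             \<le> C * (2 * L) ^ (mabs \<alpha> + 1) * fact (mabs \<alpha>) * wseq \<sigma> (mabs \<alpha> + 1) * infdist x E)"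
    proof -
    define Q where "Q = C*(2*\<rho>)^a*fact a"
    have Q0: "Q \<ge> 0" unfolding Q_def using C0 r1 by simp
    have finB: "finite B" unfolding B_def by (rule finite_mabs)
    have Fbb: "\<bar>F (\<lambda>i. \<alpha> i + \<beta> i) xh\<bar> \<le> C * \<rho>^(a + mabs \<beta>) * Wseq \<sigma> (a + mabs \<beta>)" for \<beta>
      using bspec[OF spec[OF Fb, of "\<lambda>i. \<alpha> i + \<beta> i"] xhE] by (simp add: mabs_add a_def)
    have Tb: "\<bar>T \<beta>\<bar> \<le> Q*(2*K*\<rho>*d)^(mabs \<beta>)*wseq \<sigma> (a + mabs \<beta>)" for \<beta>
      unfolding T_def K_def Q_def
      by (rule base_bound[where W="Wseq \<sigma>", OF Fbb Ww wpos nv]) (use C0 r1 in auto)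
    have gq: "(2*K*\<rho>*d) * (1/t) = r" unfolding t_def r_def using dpos lam0 Lpos by (simp add: field_simps)
    have geo: "(2*K*\<rho>*d)^j * (1/t)^j = r^j" for j
      by (subst power_mult_distrib[symmetric]) (simp only: gq)
    have cpos: "2*K*\<rho>*d \<ge> 0" using K2 r1 dpos by simp
    have P1: "\<bar>taylor_deriv p xh F \<alpha> x\<bar> \<le> C*(2*L)^(a+1)*Wseq \<sigma> a"
    proof (cases "a \<le> p")
      case False
      thus ?thesis unfolding taylor_deriv_def a_def using C0 Wge[of "mabs \<alpha>"] Lpos by simp
    next
      case True
      have "taylor_deriv p xh F \<alpha> x = sum T B"
        using True unfolding taylor_deriv_def T_def B_def a_def by simp
      hence "\<bar>taylor_deriv p xh F \<alpha> x\<bar> \<le> (\<Sum>\<beta>\<in>B. \<bar>T \<beta>\<bar>)" by simp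
      also have "\<dots> \<le> (\<Sum>\<beta>\<in>B. Q * Wseq \<sigma> a / fact a * r^(mabs \<beta>))"
      proof (rule sum_mono)
        fix \<beta> assume "\<beta> \<in> B"
        hence le: "a + mabs \<beta> \<le> Gamma_lower (wseq \<sigma>) t" using True pG unfolding B_def by simp
        have "\<bar>T \<beta>\<bar> \<le> Q*(2*K*\<rho>*d)^(mabs \<beta>)*wseq \<sigma> (a + mabs \<beta>)" by (rule Tb)
        also have "\<dots> \<le> Q*(2*K*\<rho>*d)^(mabs \<beta>)*(wseq \<sigma> a * (1/t)^(mabs \<beta>))"
          using ratio_bound[OF wpos tpos le] Q0 cpos by (intro mult_left_mono) auto
        also have "\<dots> = Q * wseq \<sigma> a * ((2*K*\<rho>*d)^(mabs \<beta>) * (1/t)^(mabs \<beta>))" by simp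
        also have "\<dots> = Q * Wseq \<sigma> a / fact a * r^(mabs \<beta>)" unfolding geo by (simp add: Ww)
        finally show "\<bar>T \<beta>\<bar> \<le> Q * Wseq \<sigma> a / fact a * r^(mabs \<beta>)" .
      qed
      also have "\<dots> = Q * Wseq \<sigma> a / fact a * (\<Sum>\<beta>\<in>B. r^(mabs \<beta>))" by (simp add: sum_distrib_left)
      also have "\<dots> \<le> Q * Wseq \<sigma> a / fact a * K"
        unfolding B_def K_def using Q0 Wge[of a] r0 r4
        by (intro mult_left_mono geom_sum_mabs) auto
      also have "\<dots> = C * ((2*\<rho>)^a * K) * Wseq \<sigma> a" unfolding Q_def by simp
      also have "\<dots> \<le> C * ((2*L)^a * (2*L)) * Wseq \<sigma> a"
      proof -
        have "K^2 \<le> K^2 * \<rho>" using r1 mult_left_mono[of 1 \<rho> "K^2"] by simp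
        moreover have "8*K^2*\<rho> = 8*(K^2*\<rho>)" by simp
        ultimately have "K \<le> 2*L" using LK K2r K2 by linarith
        hence "(2*\<rho>)^a * K \<le> (2*L)^a * (2*L)" using r1 Lr K2
          by (intro mult_mono power_mono) auto
        thus ?thesis using C0 Wge[of a] by (intro mult_right_mono mult_left_mono) auto
      qed
      also have "\<dots> = C*(2*L)^(a+1)*Wseq \<sigma> a" by simp
      finally show ?thesis .
    qed
    have P2: "\<bar>taylor_deriv p xh F \<alpha> x - F \<alpha> xh\<bar> \<le> C*(2*L)^(a+1)*fact a*wseq \<sigma> (a+1)*d" if ap: "a < p"
    proof -
      define z :: "'n \<Rightarrow> nat" where "z = (\<lambda>_. 0)"
      have zB: "z \<in> B" unfolding B_def z_def mabs_def by simp
      have Tz: "T z = F \<alpha> xh" unfolding T_def z_def mpow_def mfact_def by simp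
      have "taylor_deriv p xh F \<alpha> x = sum T B"
        using ap unfolding taylor_deriv_def T_def B_def a_def by simp
      also have "\<dots> = T z + sum T (B - {z})" by (rule sum.remove[OF finB zB])
      finally have eq: "taylor_deriv p xh F \<alpha> x - F \<alpha> xh = sum T (B - {z})" using Tz by simp
      define M where "M = Q * wseq \<sigma> (a+1) * (8*K*\<rho>*d)"
      have M0: "M \<ge> 0" unfolding M_def using Q0 wpos[of "a+1"] K2 r1 dpos by simp
      have "\<bar>taylor_deriv p xh F \<alpha> x - F \<alpha> xh\<bar> \<le> (\<Sum>\<beta>\<in>B - {z}. \<bar>T \<beta>\<bar>)" unfolding eq by simp
      also have "\<dots> \<le> (\<Sum>\<beta>\<in>B - {z}. M * (1/4)^(mabs \<beta>))"
      proof (rule sum_mono)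
        fix \<beta> assume bB: "\<beta> \<in> B - {z}"
        define j where "j = mabs \<beta>"
        have j1: "j \<ge> 1" using bB mabs_zero_iff[of \<beta>] unfolding j_def z_def by fastforce
        have le: "(a+1) + (j-1) \<le> Gamma_lower (wseq \<sigma>) t" using bB ap pG j1 unfolding B_def j_def by auto
        have jj: "(a+1) + (j-1) = a + j" using j1 by simp
        have "\<bar>T \<beta>\<bar> \<le> Q*(2*K*\<rho>*d)^j*wseq \<sigma> (a + j)" unfolding j_def by (rule Tb)
        also have "\<dots> \<le> Q*(2*K*\<rho>*d)^j*(wseq \<sigma> (a+1) * (1/t)^(j-1))"
          using ratio_bound[OF wpos tpos le] Q0 cpos unfolding jj by (intro mult_left_mono) auto
        also have "\<dots> = Q * wseq \<sigma> (a+1) * (2*K*\<rho>*d) * ((2*K*\<rho>*d)^(j-1) * (1/t)^(j-1))"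
          using j1 by (cases j) auto
        also have "\<dots> = Q * wseq \<sigma> (a+1) * (2*K*\<rho>*d) * r^(j-1)" unfolding geo ..
        also have "\<dots> \<le> Q * wseq \<sigma> (a+1) * (2*K*\<rho>*d) * (4 * (1/4)^j)"
        proof -
          have "r^(j-1) \<le> (1/4)^(j-1)" using r0 r4 by (intro power_mono) auto
          also have "\<dots> = 4 * (1/4)^j" using j1 by (cases j) auto
          finally show ?thesis using Q0 wpos[of "a+1"] cpos by (intro mult_left_mono) auto
        qed
        also have "\<dots> = M * (1/4)^(mabs \<beta>)" unfolding M_def j_def by simp
        finally show "\<bar>T \<beta>\<bar> \<le> M * (1/4)^(mabs \<beta>)" .
      qed
      also have "\<dots> = M * (\<Sum>\<beta>\<in>B - {z}. (1/4)^(mabs \<beta>))" by (simp add: sum_distrib_left)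
      also have "\<dots> \<le> M * (\<Sum>\<beta>\<in>B. (1/4)^(mabs \<beta>))"
        using M0 finB by (intro mult_left_mono sum_mono2) auto
      also have "\<dots> \<le> M * K"
        unfolding B_def K_def using M0 by (intro mult_left_mono geom_sum_mabs) auto
      also have "\<dots> = C * ((2*\<rho>)^a * (8*K^2*\<rho>)) * fact a * wseq \<sigma> (a+1) * d"
        unfolding M_def Q_def by (simp add: power2_eq_square)
      also have "\<dots> \<le> C * ((2*L)^a * (2*L)) * fact a * wseq \<sigma> (a+1) * d"
      proof -
        have h1: "(2*\<rho>)^a \<le> (2*L)^a" using r1 Lr by (intro power_mono) auto
        have h2: "8*K^2*\<rho> \<le> 2*L" using LK Lpos by linarith
        have "(2*\<rho>)^a * (8*K^2*\<rho>) \<le> (2*L)^a * (2*L)"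
          by (rule mult_mono[OF h1 h2]) (use Lpos r1 in auto)
        thus ?thesis using C0 wpos[of "a+1"] dpos
          by (intro mult_right_mono mult_left_mono) auto
      qed
      also have "\<dots> = C*(2*L)^(a+1)*fact a*wseq \<sigma> (a+1)*d" by simp
      finally show ?thesis .
    qed
    show ?thesis using P1 P2 unfolding Let_def p_def a_def d_def by simp
    qed
  qed
qed

end
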